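(* Let $k\ge1$ and let $\Gamma\subset\mathbb{R}_+^k$ be a nonempty compact set. Let $\mu_n=(q_n,s_n,b_n)$, $n=1,2,\dots$, and $\mu=(q,s,b)$ be mechanisms in $\mathcal{M}_\Gamma$. If every $\mu_n$ is monotonic, $b_n$ converges pointwise to $b$ on $\mathbb{R}^k$, and $\mu$ is seller favorable, then $\mu$ is monotonic.
   Context: A $\Gamma$-mechanism consists of $q:\mathbb{R}_+^k\to\Gamma$ and $s:\mathbb{R}_+^k\to\mathbb{R}$; it is IC if $q(x)\cdot x-s(x)\ge q(y)\cdot x-s(y)$ for all $x,y\in\mathbb{R}_+^k$, IR if $q(x)\cdot x-s(x)\ge0$ for all $x\in\mathbb{R}_+^k$, and NPT if $s(x)\ge0$ for all $x\in\mathbb{R}_+^k$. $\mathcal{M}_\Gamma$ is the set of IC, IR and NPT $\Gamma$-mechanisms. The buyer payoff function is $b:\mathbb{R}^k\to\mathbb{R}$, $b(x):=\sup_{z\in\mathbb{R}_+^k}[q(z)\cdot x-s(z)]$; a mechanism is written $\mu=(q,s,b)$. For convex $f$, $f'(x;y):=\lim_{\delta\to0^+}(f(x+\delta y)-f(x))/\delta$. $\mu\in\mathcal{M}_\Gamma$ is seller favorable if $s(x)=b'(x;x)-b(x)$ for all $x\in\mathbb{R}_+^k$. A mechanism is monotonic if $s(y)\ge s(x)$ whenever $y\ge x$ (coordinatewise) in $\mathbb{R}_+^k$. *)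

theory Defs
  imports "HOL-Analysis.Analysis"
begin

text \<open>The nonnegative orthant R_+^k, with k the (finite, nonempty) index type 'k.\<close>
definition nonneg_orthant :: "(real^'k) set" where
  "nonneg_orthant = {x. \<forall>i. 0 \<le> x $ i}"

text \<open>A Gamma-mechanism (q, s) that is IC, IR and NPT (membership in M_Gamma).
  Only the values of q, s on R_+^k are relevant.\<close>
definition in_M :: "(real^'k) set \<Rightarrow> (real^'k \<Rightarrow> real^'k) \<Rightarrow> (real^'k \<Rightarrow> real) \<Rightarrow> bool" where
  "in_M \<Gamma> q s \<longleftrightarrow>
     (\<forall>x\<in>nonneg_orthant. q x \<in> \<Gamma>) \<and>
     (\<forall>x\<in>nonneg_orthant. \<forall>y\<in>nonneg_orthant. q x \<bullet> x - s x \<ge> q y \<bullet> x - s y) \<and>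
     (\<forall>x\<in>nonneg_orthant. q x \<bullet> x - s x \<ge> 0) \<and>
     (\<forall>x\<in>nonneg_orthant. s x \<ge> 0)"

definition buyer_payoff :: "(real^'k \<Rightarrow> real^'k) \<Rightarrow> (real^'k \<Rightarrow> real) \<Rightarrow> real^'k \<Rightarrow> real" where
  "buyer_payoff q s x = (SUP z\<in>nonneg_orthant. q z \<bullet> x - s z)"

definition dir_deriv :: "(real^'k \<Rightarrow> real) \<Rightarrow> real^'k \<Rightarrow> real^'k \<Rightarrow> real" where
  "dir_deriv f x y = Lim (at_right 0) (\<lambda>\<delta>. (f (x + \<delta> *\<^sub>R y) - f x) / \<delta>)"

definition seller_favorable :: "(real^'k \<Rightarrow> real^'k) \<Rightarrow> (real^'k \<Rightarrow> real) \<Rightarrow> bool" where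
  "seller_favorable q s \<longleftrightarrow>
     (\<forall>x\<in>nonneg_orthant. s x = dir_deriv (buyer_payoff q s) x x - buyer_payoff q s x)"

definition monotonic_mech :: "(real^'k \<Rightarrow> real) \<Rightarrow> bool" where
  "monotonic_mech s \<longleftrightarrow>
     (\<forall>x\<in>nonneg_orthant. \<forall>y\<in>nonneg_orthant. (\<forall>i. x $ i \<le> y $ i) \<longrightarrow> s x \<le> s y)"

end

theory Submission
  imports Defs
begin

lemma orth_scale: "u \<in> nonneg_orthant \<Longrightarrow> 0 \<le> e \<Longrightarrow> u + e *\<^sub>R u \<in> nonneg_orthant"
  by (auto simp: nonneg_orthant_def)

lemma orth_inner: "a \<in> nonneg_orthant \<Longrightarrow> u \<in> nonneg_orthant \<Longrightarrow> 0 \<le> a \<bullet> u"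
  unfolding nonneg_orthant_def inner_vec_def by (auto intro!: sum_nonneg)

lemma bp_eq:
  assumes ic: "\<And>x y. x\<in>nonneg_orthant \<Longrightarrow> y\<in>nonneg_orthant \<Longrightarrow> q y \<bullet> x - s y \<le> q x \<bullet> x - s x"
    and u: "u \<in> nonneg_orthant"
  shows "buyer_payoff q s u = q u \<bullet> u - s u"
  unfolding buyer_payoff_def by (rule cSup_eq_maximum) (use u ic in auto)

lemma bp_sub:
  assumes ic: "\<And>x y. x\<in>nonneg_orthant \<Longrightarrow> y\<in>nonneg_orthant \<Longrightarrow> q y \<bullet> x - s y \<le> q x \<bullet> x - s x"
    and u: "u \<in> nonneg_orthant" and v: "v \<in> nonneg_orthant"
  shows "buyer_payoff q s u + q u \<bullet> (v - u) \<le> buyer_payoff q s v"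
  using bp_eq[OF ic u] bp_eq[OF ic v] ic[OF v u] by (simp add: inner_diff_right)

lemma mono_lim:
  fixes D :: "real \<Rightarrow> real"
  assumes m: "\<And>a b. 0<a \<Longrightarrow> a\<le>b \<Longrightarrow> D a \<le> D b" and lb: "\<And>a. 0<a \<Longrightarrow> c \<le> D a"
  shows "Lim (at_right 0) D = Inf (D ` {0<..})"
proof (rule tendsto_Lim)
  show "\<not> trivial_limit (at_right (0::real))" by simp
  have bdd: "bdd_below (D ` {0<..})" using lb by (auto intro!: bdd_belowI[of _ c])
  show "(D \<longlongrightarrow> Inf (D ` {0<..})) (at_right 0)"
  proof (rule order_tendstoI)
    fix a assume "a < Inf (D ` {0<..})"
    then have "\<forall>d>0. a < D d" using cInf_lower[OF _ bdd] by fastforce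
    then show "eventually (\<lambda>d. a < D d) (at_right 0)"
      unfolding eventually_at_right_field by (intro exI[of _ 1]) auto
  next
    fix a assume "Inf (D ` {0<..}) < a"
    then obtain d0 where d0: "d0 > 0" "D d0 < a"
      using cInf_lessD[of "D ` {0<..}" a] by auto
    then show "eventually (\<lambda>d. D d < a) (at_right 0)"
      unfolding eventually_at_right_field using d0
      by (intro exI[of _ d0]) (auto intro!: le_less_trans[OF m[of _ d0]])
  qed
qed

theorem proposition5:
  fixes \<Gamma> :: "(real^'k) set"
    and qn :: "nat \<Rightarrow> real^'k \<Rightarrow> real^'k" and sn :: "nat \<Rightarrow> real^'k \<Rightarrow> real"
    and q :: "real^'k \<Rightarrow> real^'k" and s :: "real^'k \<Rightarrow> real"
  assumes "\<Gamma> \<subseteq> nonneg_orthant" and "\<Gamma> \<noteq> {}" and "compact \<Gamma>"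
    and "\<And>n. in_M \<Gamma> (qn n) (sn n)"
    and "in_M \<Gamma> q s"
    and "\<And>n. monotonic_mech (sn n)"
    and "\<And>x. (\<lambda>n. buyer_payoff (qn n) (sn n) x) \<longlonglongrightarrow> buyer_payoff q s x"
    and "seller_favorable q s"
  shows "monotonic_mech s"
proof -
  note G = assms(1)
  obtain M where M: "\<And>g. g \<in> \<Gamma> \<Longrightarrow> norm g \<le> M"
    using compact_imp_bounded[OF assms(3)] unfolding bounded_iff by blast
  have icn: "\<And>n x y. x\<in>nonneg_orthant \<Longrightarrow> y\<in>nonneg_orthant \<Longrightarrow> qn n y \<bullet> x - sn n y \<le> qn n x \<bullet> x - sn n x"
    using assms(4) unfolding in_M_def by blast
  have ic: "\<And>x y. x\<in>nonneg_orthant \<Longrightarrow> y\<in>nonneg_orthant \<Longrightarrow> q y \<bullet> x - s y \<le> q x \<bullet> x - s x"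
    using assms(5) unfolding in_M_def by blast
  have qG: "\<And>x. x\<in>nonneg_orthant \<Longrightarrow> q x \<in> \<Gamma>"
    using assms(5) unfolding in_M_def by blast
  have qO: "\<And>x. x\<in>nonneg_orthant \<Longrightarrow> q x \<in> nonneg_orthant" using qG G by blast
  define b where "b = buyer_payoff q s"
  define B where "B n = buyer_payoff (qn n) (sn n)" for n
  define D where "D u d = (b (u + d *\<^sub>R u) - b u) / d" for u d
  have bsub: "\<And>u v. u\<in>nonneg_orthant \<Longrightarrow> v\<in>nonneg_orthant \<Longrightarrow> b u + q u \<bullet> (v - u) \<le> b v"
    unfolding b_def by (rule bp_sub[OF ic])
  have Bsub: "\<And>n u v. u\<in>nonneg_orthant \<Longrightarrow> v\<in>nonneg_orthant \<Longrightarrow> B n u + qn n u \<bullet> (v - u) \<le> B n v"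
    unfolding B_def by (rule bp_sub[OF icn])
  have Beq: "\<And>n u. u\<in>nonneg_orthant \<Longrightarrow> sn n u = qn n u \<bullet> u - B n u"
    unfolding B_def using bp_eq[OF icn] by simp
  have Dnn: "0 \<le> D u d" if u: "u\<in>nonneg_orthant" and d: "0 < d" for u d
  proof -
    have "b u + q u \<bullet> (d *\<^sub>R u) \<le> b (u + d *\<^sub>R u)" using bsub[OF u orth_scale[OF u]] d by simp
    moreover have "0 \<le> q u \<bullet> (d *\<^sub>R u)" using orth_inner[OF qO[OF u] u] d by simp
    ultimately show ?thesis unfolding D_def using d by simp
  qed
  have Dmono: "D u d1 \<le> D u d2" if u: "u\<in>nonneg_orthant" and d: "0 < d1" "d1 \<le> d2" for u d1 d2
  proof -
    define p where "p = u + d1 *\<^sub>R u"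
    have p: "p \<in> nonneg_orthant" unfolding p_def using orth_scale[OF u] d by simp
    define g where "g = q p \<bullet> u"
    have "b p + q p \<bullet> (u - p) \<le> b u" using bsub[OF p u] .
    then have h1: "b p - d1 * g \<le> b u" unfolding p_def g_def by (simp add: inner_diff_right)
    have "b p + q p \<bullet> ((u + d2 *\<^sub>R u) - p) \<le> b (u + d2 *\<^sub>R u)"
      using bsub[OF p orth_scale[OF u]] d by simp
    then have h2: "b p + (d2 - d1) * g \<le> b (u + d2 *\<^sub>R u)"
      unfolding p_def g_def by (simp add: inner_diff_right algebra_simps)
    have "d2 * (b p - b u) \<le> d1 * (b (u + d2 *\<^sub>R u) - b u)"
    proof -
      have "(d2 - d1) * (b p - b u) \<le> (d2 - d1) * (d1 * g)" using h1 d by (intro mult_left_mono) auto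
      also have "\<dots> = d1 * ((d2 - d1) * g)" by (simp add: algebra_simps)
      also have "\<dots> \<le> d1 * (b (u + d2 *\<^sub>R u) - b p)"
        using h2 d by (intro mult_left_mono) auto
      finally show ?thesis by (simp add: algebra_simps)
    qed
    then show ?thesis unfolding D_def p_def using d by (simp add: field_simps)
  qed
  have Dlim: "dir_deriv b u u = Inf (D u ` {0<..})" if u: "u\<in>nonneg_orthant" for u
  proof -
    have "(\<lambda>d. (b (u + d *\<^sub>R u) - b u) / d) = D u" by (simp add: D_def fun_eq_iff)
    then show ?thesis unfolding dir_deriv_def
      by (simp, intro mono_lim[where c=0]) (use Dmono[OF u] Dnn[OF u] in auto)
  qed
  have bdd: "bdd_below (D u ` {0<..})" if u: "u\<in>nonneg_orthant" for u
    using Dnn[OF u] by (auto intro!: bdd_belowI[of _ 0])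
  have sfav: "\<And>u. u\<in>nonneg_orthant \<Longrightarrow> s u = dir_deriv b u u - b u"
    using assms(8) unfolding seller_favorable_def b_def by blast
  have Blim: "\<And>u. (\<lambda>n. B n u) \<longlonglongrightarrow> b u" unfolding B_def b_def by (rule assms(7))
  show ?thesis unfolding monotonic_mech_def
  proof (intro ballI impI)
    fix x y :: "real^'k" assume x: "x \<in> nonneg_orthant" and y: "y \<in> nonneg_orthant" and xy: "\<forall>i. x $ i \<le> y $ i"
    define A where "A = Inf (D x ` {0<..})"
    have A0: "0 \<le> A" unfolding A_def using Dnn[OF x] by (intro cInf_greatest) auto
    have AD: "\<And>d. 0 < d \<Longrightarrow> A \<le> D x d" unfolding A_def using bdd[OF x] by (intro cInf_lower) auto
    have key: "A - b x - e * M * norm x \<le> (1 + e) * (b (y + h *\<^sub>R y) - b y) / (h - e) - b y"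
      if e: "0 < e" "e < h" for e h
    proof -
      define X where "X = x + e *\<^sub>R x"
      define Y where "Y = y + e *\<^sub>R y"
      define Y' where "Y' = y + h *\<^sub>R y"
      have X: "X \<in> nonneg_orthant" unfolding X_def using orth_scale[OF x] e by simp
      have Y: "Y \<in> nonneg_orthant" unfolding Y_def using orth_scale[OF y] e by simp
      have Y': "Y' \<in> nonneg_orthant" unfolding Y'_def using orth_scale[OF y] e by simp
      have XY: "\<forall>i. X $ i \<le> Y $ i" unfolding X_def Y_def using xy e
        by (auto intro!: add_mono mult_left_mono)
      have ineq: "(1 + e) * (B n X - B n x) / e - B n X \<le> (1 + e) * (B n Y' - B n Y) / (h - e) - B n Y" for n
      proof -
        have "B n X + qn n X \<bullet> (x - X) \<le> B n x" using Bsub[OF X x] .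
        then have a1: "(B n X - B n x) / e \<le> qn n X \<bullet> x"
          unfolding X_def using e by (simp add: inner_diff_right field_simps)
        have a2: "sn n X = (1 + e) * (qn n X \<bullet> x) - B n X"
          using Beq[OF X] unfolding X_def by (simp add: inner_add_right algebra_simps)
        have "B n Y + qn n Y \<bullet> (Y' - Y) \<le> B n Y'" using Bsub[OF Y Y'] .
        then have b1: "qn n Y \<bullet> y \<le> (B n Y' - B n Y) / (h - e)"
          unfolding Y_def Y'_def using e by (simp add: inner_diff_right algebra_simps field_simps)
        have b2: "sn n Y = (1 + e) * (qn n Y \<bullet> y) - B n Y"
          using Beq[OF Y] unfolding Y_def by (simp add: inner_add_right algebra_simps)
        have c: "sn n X \<le> sn n Y" using assms(6)[of n] X Y XY unfolding monotonic_mech_def by blast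
        have "(1 + e) * ((B n X - B n x) / e) \<le> (1 + e) * (qn n X \<bullet> x)"
          using a1 e by (intro mult_left_mono) auto
        moreover have "(1 + e) * (qn n Y \<bullet> y) \<le> (1 + e) * ((B n Y' - B n Y) / (h - e))"
          using b1 e by (intro mult_left_mono) auto
        ultimately show ?thesis using a2 b2 c by simp
      qed
      have lim: "(1 + e) * (b X - b x) / e - b X \<le> (1 + e) * (b Y' - b Y) / (h - e) - b Y"
      proof (rule tendsto_le[of sequentially])
        show "((\<lambda>n. (1 + e) * (B n Y' - B n Y) / (h - e) - B n Y) \<longlongrightarrow> (1 + e) * (b Y' - b Y) / (h - e) - b Y) sequentially"
          using e by (intro tendsto_intros Blim) auto
        show "((\<lambda>n. (1 + e) * (B n X - B n x) / e - B n X) \<longlongrightarrow> (1 + e) * (b X - b x) / e - b X) sequentially"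
          using e by (intro tendsto_intros Blim) auto
      qed (use ineq in auto)
      have "b X + q X \<bullet> (x - X) \<le> b x" using bsub[OF X x] .
      moreover have "q X \<bullet> x \<le> M * norm x"
        using norm_cauchy_schwarz[of "q X" x] M[OF qG[OF X]] by (meson mult_right_mono norm_ge_zero order_trans)
      ultimately have bX: "b X \<le> b x + e * (M * norm x)"
        unfolding X_def using e by (simp add: inner_diff_right) (smt (verit) mult_left_mono)
      have "b y + q y \<bullet> (Y - y) \<le> b Y" using bsub[OF y Y] .
      moreover have "0 \<le> q y \<bullet> (Y - y)" unfolding Y_def using orth_inner[OF qO[OF y] y] e by simp
      ultimately have bY: "b y \<le> b Y" by simp
      have "(b X - b x) / e = D x e" unfolding D_def X_def ..
      then have "A \<le> (b X - b x) / e" using AD e by simp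
      then have "(1 + e) * A \<le> (1 + e) * ((b X - b x) / e)" using e by (intro mult_left_mono) auto
      then have "(1 + e) * A \<le> (1 + e) * (b X - b x) / e" by simp
      moreover have "(1 + e) * (b Y' - b Y) / (h - e) \<le> (1 + e) * (b Y' - b y) / (h - e)"
        using e bY by (intro divide_right_mono mult_left_mono) auto
      moreover have "A \<le> (1 + e) * A" using A0 e by (simp add: algebra_simps)
      moreover have "e * M * norm x = e * (M * norm x)" by simp
      ultimately show ?thesis using lim bX bY unfolding Y'_def by linarith
    qed
    have "A - b x \<le> (b (y + h *\<^sub>R y) - b y) / h - b y" if h: "0 < h" for h
    proof (rule tendsto_le[of "at_right 0"])
      show "((\<lambda>e. A - b x - e * M * norm x) \<longlongrightarrow> A - b x) (at_right 0)"
        by (auto intro!: tendsto_eq_intros)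
      show "((\<lambda>e. (1 + e) * (b (y + h *\<^sub>R y) - b y) / (h - e) - b y) \<longlongrightarrow> (b (y + h *\<^sub>R y) - b y) / h - b y) (at_right 0)"
        using h by (auto intro!: tendsto_eq_intros)
      show "eventually (\<lambda>e. A - b x - e * M * norm x \<le> (1 + e) * (b (y + h *\<^sub>R y) - b y) / (h - e) - b y) (at_right 0)"
        unfolding eventually_at_right_field using h key by (intro exI[of _ h]) auto
    qed simp
    then have "A - b x + b y \<le> Inf (D y ` {0<..})"
      by (intro cInf_greatest) (force simp: D_def)+
    then show "s x \<le> s y" using sfav[OF x] sfav[OF y] Dlim[OF x] Dlim[OF y] unfolding A_def by simp
  qed
qed

end
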